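(* Let $(E,\tau)$ be a violator space, $X\subseteq E$ and $x\in X$. Then $x$ is an extreme point of $X$ if and only if $x\in B$ for every $B\subseteq X$ with $\tau(B)=\tau(X)$.
   Context: $E$ is a finite set and $\tau:2^E\to 2^E$. $(E,\tau)$ is a violator space if (C1) $Y\subseteq\tau(Y)$ for all $Y\subseteq E$, and (C22) for all $F,G\subseteq E$, $F\subseteq G\subseteq\tau(F)$ implies $\tau(G)=\tau(F)$. An element $x\in X$ is an extreme point of $X$ if $x\notin\tau(X-\{x\})$. *)

theory Defs
  imports Main
begin

text \<open>A violator space (E, tau): E finite, tau maps subsets of E to subsets of E,
 satisfying (C1) extensivity and (C22) consistency.\<close>
definition violator_space :: "'a set \<Rightarrow> ('a set \<Rightarrow> 'a set) \<Rightarrow> bool" where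
  "violator_space E \<tau> \<longleftrightarrow>
     finite E \<and>
     (\<forall>Y. Y \<subseteq> E \<longrightarrow> \<tau> Y \<subseteq> E) \<and>
     (\<forall>Y. Y \<subseteq> E \<longrightarrow> Y \<subseteq> \<tau> Y) \<and>
     (\<forall>F G. F \<subseteq> E \<longrightarrow> G \<subseteq> E \<longrightarrow> F \<subseteq> G \<longrightarrow> G \<subseteq> \<tau> F \<longrightarrow> \<tau> G = \<tau> F)"

definition extreme_point :: "('a set \<Rightarrow> 'a set) \<Rightarrow> 'a set \<Rightarrow> 'a \<Rightarrow> bool" where
  "extreme_point \<tau> X x \<longleftrightarrow> x \<in> X \<and> x \<notin> \<tau> (X - {x})"

end

theory Submission
  imports Defs
begin

theorem mainTheorem12:
  assumes "violator_space E \<tau>" and "X \<subseteq> E" and "x \<in> X"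
  shows "extreme_point \<tau> X x \<longleftrightarrow> (\<forall>B. B \<subseteq> X \<longrightarrow> \<tau> B = \<tau> X \<longrightarrow> x \<in> B)"
proof -
  have C1: "\<And>Y. Y \<subseteq> E \<Longrightarrow> Y \<subseteq> \<tau> Y" and
       C22: "\<And>F G. F \<subseteq> E \<Longrightarrow> G \<subseteq> E \<Longrightarrow> F \<subseteq> G \<Longrightarrow> G \<subseteq> \<tau> F \<Longrightarrow> \<tau> G = \<tau> F"
    using assms(1) unfolding violator_space_def by blast+
  show ?thesis
  proof
    assume ex: "extreme_point \<tau> X x"
    show "\<forall>B. B \<subseteq> X \<longrightarrow> \<tau> B = \<tau> X \<longrightarrow> x \<in> B"
    proof (intro allI impI, rule ccontr)
      fix B assume B: "B \<subseteq> X" "\<tau> B = \<tau> X" "x \<notin> B"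
      have "X \<subseteq> \<tau> B" using C1[OF assms(2)] B by simp
      hence "\<tau> (X - {x}) = \<tau> B" using C22[of B "X - {x}"] B assms(2) by blast
      thus False using ex B C1[OF assms(2)] assms(3) unfolding extreme_point_def by auto
    qed
  next
    assume H: "\<forall>B. B \<subseteq> X \<longrightarrow> \<tau> B = \<tau> X \<longrightarrow> x \<in> B"
    show "extreme_point \<tau> X x"
      unfolding extreme_point_def
    proof (intro conjI assms(3) notI)
      assume xin: "x \<in> \<tau> (X - {x})"
      have "X \<subseteq> \<tau> (X - {x})" using C1[of "X - {x}"] assms(2) xin by blast
      hence "\<tau> X = \<tau> (X - {x})" using C22[of "X - {x}" X] assms(2) by blast
      thus False using H by auto
    qed
  qed
qed

end
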